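(* Let $B$ be the randomized response mechanism $B(y)=|h(y)-(1-V)|$ with $h:\mathbb Y\to\{0,1\}$, $V\sim\mathrm{Bern}(\theta)$, $\theta\in[0,1]$, and let $M=B\circ S$ with $S$ Poisson subsampling of rate $r$. Then for all $x\simeq_{K_+,K_-}x'$, $$\Psi_\alpha(m_x\|m_{x'})\le\max_{\tau\in\{\theta,1-\theta\}}\Psi_\alpha\big((1-w^{(1)})\mathrm{Bern}(\cdot\mid\theta)+w^{(1)}\mathrm{Bern}(\cdot\mid\tau)\ \big\|\ (1-w^{(2)})\mathrm{Bern}(\cdot\mid\theta)+w^{(2)}\mathrm{Bern}(\cdot\mid1-\tau)\big),$$ where $w^{(1)}=1-(1-r)^{K_-}$ and $w^{(2)}=1-(1-r)^{K_+}$.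
   Context: Finite set $\mathbb A$, datasets $x\subseteq\mathbb A$, batches are subsets $y\subseteq x$. Poisson subsampling with rate $r$: $s_x(y)=r^{|y|}(1-r)^{|x|-|y|}$ for $y\subseteq x$; $m_x(z)=\sum_y b_y(z)s_x(y)$ where $b_y$ is the pmf of $B(y)$ on $\{0,1\}$. $\mathrm{Bern}(\cdot\mid p)$ is the pmf on $\{0,1\}$ with mass $p$ at $1$. $x\simeq_{K_+,K_-}x'$ iff $x'=(x\setminus g_-)\cup g_+$ with $g_-\subseteq x$, $|g_-|=K_-$, $g_+\cap x=\emptyset$, $|g_+|=K_+$. For pmfs on $\{0,1\}$: $H_\alpha(p\|q)=\sum_z\max\{p(z)-\alpha q(z),0\}$ ($\alpha\ge0$), $\Lambda_\alpha(p\|q)=\sum_z p(z)^\alpha q(z)^{1-\alpha}$ ($\alpha>1$); $\Psi_\alpha$ is either. *)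

theory Defs
  imports "HOL-Analysis.Analysis"
begin

text \<open>Pmfs on {0,1} are represented as functions nat => real; only z in {0,1} matter.\<close>

definition Bern :: "real \<Rightarrow> nat \<Rightarrow> real" where
  "Bern p z = (if z = 1 then p else if z = 0 then 1 - p else 0)"

definition rr_pmf :: "('b \<Rightarrow> nat) \<Rightarrow> real \<Rightarrow> 'b \<Rightarrow> nat \<Rightarrow> real" where
  "rr_pmf h \<theta> y z =
     (\<Sum>v\<in>{0::nat,1}. Bern \<theta> v *
        (if nat \<bar>int (h y) - (1 - int v)\<bar> = z then 1 else 0))"

definition poisson_sub :: "real \<Rightarrow> 'a set \<Rightarrow> 'a set \<Rightarrow> real" where
  "poisson_sub r x y = r ^ card y * (1 - r) ^ (card x - card y)"

definition subsampled_pmf ::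
  "('a set \<Rightarrow> nat) \<Rightarrow> real \<Rightarrow> real \<Rightarrow> 'a set \<Rightarrow> nat \<Rightarrow> real" where
  "subsampled_pmf h \<theta> r x z = (\<Sum>y\<in>Pow x. rr_pmf h \<theta> y z * poisson_sub r x y)"

definition neighbours :: "nat \<Rightarrow> nat \<Rightarrow> 'a set \<Rightarrow> 'a set \<Rightarrow> bool" where
  "neighbours Kp Km x x' \<longleftrightarrow>
     (\<exists>gm gp. x' = (x - gm) \<union> gp \<and> gm \<subseteq> x \<and> card gm = Km \<and>
              gp \<inter> x = {} \<and> finite gp \<and> card gp = Kp)"

definition hockey_stick :: "real \<Rightarrow> (nat \<Rightarrow> real) \<Rightarrow> (nat \<Rightarrow> real) \<Rightarrow> real" where
  "hockey_stick \<alpha> p q = (\<Sum>z\<in>{0::nat,1}. max (p z - \<alpha> * q z) 0)"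

definition renyi_moment :: "real \<Rightarrow> (nat \<Rightarrow> real) \<Rightarrow> (nat \<Rightarrow> real) \<Rightarrow> ereal" where
  "renyi_moment \<alpha> p q = (\<Sum>z\<in>{0::nat,1}.
      if p z = 0 then 0
      else if q z = 0 then \<infinity>
      else ereal (p z powr \<alpha> * q z powr (1 - \<alpha>)))"

definition mix :: "real \<Rightarrow> (nat \<Rightarrow> real) \<Rightarrow> (nat \<Rightarrow> real) \<Rightarrow> nat \<Rightarrow> real" where
  "mix w p q z = (1 - w) * p z + w * q z"

end

theory Submission
  imports Defs
begin


definition Ex :: "real \<Rightarrow> 'a set \<Rightarrow> ('a set \<Rightarrow> real) \<Rightarrow> real" where
  "Ex r X f = (\<Sum>y\<in>Pow X. f y * poisson_sub r X y)"

lemma Ex_empty: "Ex r {} f = f {}"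
  by (simp add: Ex_def poisson_sub_def)

lemma Ex_insert:
  assumes "finite X" "a \<notin> X"
  shows "Ex r (insert a X) f = Ex r X (\<lambda>y. r * f (insert a y) + (1 - r) * f y)"
proof -
  have fin: "finite (Pow X)" using assms by simp
  have disj: "Pow X \<inter> insert a ` Pow X = {}" using assms by auto
  have inj: "inj_on (insert a) (Pow X)" using assms
    by (smt (verit, ccfv_SIG) PowD inj_onI insert_ident subset_iff)
  have s1: "poisson_sub r (insert a X) y = (1 - r) * poisson_sub r X y" if "y \<in> Pow X" for y
  proof -
    have "card y \<le> card X" using that assms by (simp add: card_mono)
    then have "card (insert a X) - card y = Suc (card X - card y)" using assms by simp
    then show ?thesis by (simp add: poisson_sub_def)
  qed
  have s2: "poisson_sub r (insert a X) (insert a y) = r * poisson_sub r X y" if "y \<in> Pow X" for y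
  proof -
    have fy: "finite y" "a \<notin> y" using that assms finite_subset by auto
    have "card y \<le> card X" using that assms by (simp add: card_mono)
    then show ?thesis using fy assms by (simp add: poisson_sub_def)
  qed
  have "Ex r (insert a X) f = (\<Sum>y\<in>Pow X. f y * poisson_sub r (insert a X) y)
        + (\<Sum>y\<in>insert a ` Pow X. f y * poisson_sub r (insert a X) y)"
    unfolding Ex_def Pow_insert using fin disj by (simp add: sum.union_disjoint)
  also have "\<dots> = (\<Sum>y\<in>Pow X. f y * ((1 - r) * poisson_sub r X y))
        + (\<Sum>y\<in>Pow X. f (insert a y) * (r * poisson_sub r X y))"
    using s1 s2 by (simp add: sum.reindex[OF inj])
  also have "\<dots> = Ex r X (\<lambda>y. r * f (insert a y) + (1 - r) * f y)"
    unfolding Ex_def by (simp add: sum.distrib[symmetric] algebra_simps)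
  finally show ?thesis .
qed

lemma Ex_const: "finite X \<Longrightarrow> Ex r X (\<lambda>_. c) = c"
  by (induction X rule: finite_induct) (simp_all add: Ex_empty Ex_insert algebra_simps)

lemma Ex_affine: "Ex r X (\<lambda>y. c + g y * d) = c * Ex r X (\<lambda>_. 1) + Ex r X g * d"
  unfolding Ex_def by (simp add: sum.distrib sum_distrib_left sum_distrib_right algebra_simps)

lemma Ex_union:
  assumes "finite G" "finite S" "S \<inter> G = {}"
  shows "Ex r (S \<union> G) f = Ex r S (\<lambda>y0. Ex r G (\<lambda>y1. f (y0 \<union> y1)))"
  using assms
proof (induction G arbitrary: f rule: finite_induct)
  case empty
  then show ?case by (simp add: Ex_empty)
next
  case (insert a G)
  have "Ex r (S \<union> insert a G) f = Ex r (insert a (S \<union> G)) f" by simp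
  also have "\<dots> = Ex r (S \<union> G) (\<lambda>y. r * f (insert a y) + (1 - r) * f y)"
    using insert by (simp add: Ex_insert)
  also have "\<dots> = Ex r S (\<lambda>y0. Ex r G (\<lambda>y1. r * f (insert a (y0 \<union> y1)) + (1 - r) * f (y0 \<union> y1)))"
    using insert by simp
  also have "\<dots> = Ex r S (\<lambda>y0. Ex r (insert a G) (\<lambda>y1. f (y0 \<union> y1)))"
    using insert by (simp add: Ex_insert)
  finally show ?case .
qed

lemma Ex_bounds:
  assumes "finite G" "0 \<le> r" "r \<le> 1" "\<And>y. 0 \<le> f y \<and> f y \<le> 1"
  shows "(1 - r) ^ card G * f {} \<le> Ex r G f \<and> Ex r G f \<le> (1 - r) ^ card G * f {} + (1 - (1 - r) ^ card G)"
  using assms(1,4)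
proof (induction G arbitrary: f rule: finite_induct)
  case empty
  then show ?case by (simp add: Ex_empty)
next
  case (insert a G)
  define f' where "f' y = r * f (insert a y) + (1 - r) * f y" for y
  have b: "0 \<le> f' y \<and> f' y \<le> 1" for y
    using insert(4)[of y] insert(4)[of "insert a y"] assms(2,3) unfolding f'_def
    by (smt (verit, best) mult_left_le mult_nonneg_nonneg)
  have IH: "(1 - r) ^ card G * f' {} \<le> Ex r G f' \<and> Ex r G f' \<le> (1 - r) ^ card G * f' {} + (1 - (1 - r) ^ card G)"
    using insert(3)[of f'] b by blast
  have e: "Ex r (insert a G) f = Ex r G f'" using insert by (simp add: Ex_insert f'_def[abs_def])
  have p: "0 \<le> (1-r)^card G" "(1-r)^card G \<le> 1" using assms by (simp_all add: power_le_one)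
  have fa: "0 \<le> f {a}" "f {a} \<le> 1" using insert(4) by auto
  have "0 \<le> (1-r)^card G * r * f {a}" using p fa assms by simp
  moreover have "(1-r)^card G * r * f {a} \<le> (1-r)^card G * r"
    using p fa assms by (simp add: mult_left_le)
  ultimately show ?case using IH e insert(1,2) unfolding f'_def
    by (simp add: algebra_simps)
qed



definition P :: "real \<Rightarrow> real \<Rightarrow> nat \<Rightarrow> real" where
  "P \<theta> t = mix t (Bern \<theta>) (Bern (1 - \<theta>))"

lemma rr_P:
  assumes "h y \<in> {0,1}"
  shows "rr_pmf h \<theta> y z = Bern \<theta> z + (if h y = 0 then 1 else 0) * (Bern (1-\<theta>) z - Bern \<theta> z)"
  using assms by (auto simp: rr_pmf_def Bern_def)

lemma sub_P:
  assumes "finite x" "\<And>y. h y \<in> {0,1}"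
  shows "subsampled_pmf h \<theta> r x = P \<theta> (Ex r x (\<lambda>y. if h y = 0 then 1 else 0))"
proof
  fix z
  have "subsampled_pmf h \<theta> r x z = Ex r x (\<lambda>y. Bern \<theta> z + (if h y = 0 then 1 else 0) * (Bern (1-\<theta>) z - Bern \<theta> z))"
    unfolding subsampled_pmf_def Ex_def using rr_P[of h, OF assms(2)] by simp
  also have "\<dots> = P \<theta> (Ex r x (\<lambda>y. if h y = 0 then 1 else 0)) z"
    by (subst Ex_affine) (simp add: Ex_const assms P_def mix_def algebra_simps)
  finally show "subsampled_pmf h \<theta> r x z = P \<theta> (Ex r x (\<lambda>y. if h y = 0 then 1 else 0)) z" .
qed

lemma Ex_convex:
  assumes "finite X" "0 \<le> r" "r \<le> 1" "convex K" "\<And>y. (A y, B y) \<in> K"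
  shows "(Ex r X A, Ex r X B) \<in> K"
  using assms(1,5)
proof (induction X arbitrary: A B rule: finite_induct)
  case empty
  then show ?case by (simp add: Ex_empty)
next
  case (insert a X)
  have "(r * A (insert a y) + (1 - r) * A y, r * B (insert a y) + (1 - r) * B y) \<in> K" for y
  proof -
    have "r *\<^sub>R (A (insert a y), B (insert a y)) + (1 - r) *\<^sub>R (A y, B y) \<in> K"
      using convexD[OF assms(4) insert(4)[of "insert a y"] insert(4)[of y]] assms(2,3) by simp
    then show ?thesis by simp
  qed
  then show ?case using insert(1,2) insert(3) by (simp add: Ex_insert)
qed

lemma P_lin: assumes "u + v = 1" shows "P \<theta> (u * a + v * b) z = u * P \<theta> a z + v * P \<theta> b z"
proof -
  have e: "Bern \<theta> z = u * Bern \<theta> z + v * Bern \<theta> z" 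
    by (metis assms distrib_right mult_1)
  show ?thesis unfolding P_def mix_def using e by (simp add: algebra_simps)
qed
  
lemma P_flip0: "P \<theta> (1 - a) 0 = P \<theta> a 1" and P_flip1: "P \<theta> (1 - a) 1 = P \<theta> a 0"
  unfolding P_def mix_def Bern_def by (simp_all add: algebra_simps)

lemma P_sum: "P \<theta> a 0 + P \<theta> a 1 = 1"
  unfolding P_def mix_def Bern_def by (simp_all add: algebra_simps)

lemma P_nonneg: "0 \<le> \<theta> \<Longrightarrow> \<theta> \<le> 1 \<Longrightarrow> 0 \<le> a \<Longrightarrow> a \<le> 1 \<Longrightarrow> 0 \<le> P \<theta> a z"
  unfolding P_def mix_def Bern_def by (simp add: mult_nonneg_nonneg)



lemma segK:
  fixes p1 p2 q1 q2 l a b :: real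
  assumes "convex K" "(p1,p2) \<in> K" "(q1,q2) \<in> K" "0 \<le> l" "l \<le> 1"
    "a = (1-l)*p1 + l*q1" "b = (1-l)*p2 + l*q2"
  shows "(a,b) \<in> K"
proof -
  have "(1-l) *\<^sub>R (p1,p2) + l *\<^sub>R (q1,q2) \<in> K"
    using convexD[OF assms(1,2,3)] assms(4,5) by simp
  then show ?thesis using assms(6,7) by simp
qed

lemma box:
  fixes w1 w2 :: real
  assumes K: "convex K" and k1: "(w1,0) \<in> K" and k2: "(0,w2) \<in> K"
    and kd: "\<And>c. 0 \<le> c \<Longrightarrow> c \<le> 1 \<Longrightarrow> (c,c) \<in> K"
    and w: "0 \<le> w1" "w1 \<le> 1" "0 \<le> w2" "w2 \<le> 1"
    and ab: "0 \<le> a" "a \<le> w1" "0 \<le> b" "b \<le> w2"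
  shows "(a,b) \<in> K"
proof -
  have k0: "(0,0) \<in> K" using kd by simp
  have k3: "(w1,w2) \<in> K"
  proof (cases "w2 \<le> w1")
    case True
    have l: "0 \<le> w2/w1" "w2/w1 \<le> 1" using True w by (auto simp: divide_le_eq_1)
    have "w2 = (1 - w2/w1)*0 + (w2/w1)*w1" using True w by auto
    then show ?thesis using segK[OF K k1 kd[of w1] l, of w1 w2] w by (simp add: algebra_simps)
  next
    case False
    have l: "0 \<le> w1/w2" "w1/w2 \<le> 1" using False w by (auto simp: divide_le_eq_1)
    have "w1 = (1 - w1/w2)*0 + (w1/w2)*w2" using False w by auto
    then show ?thesis using segK[OF K k2 kd[of w2] l, of w1 w2] w by (simp add: algebra_simps)
  qed
  have la: "0 \<le> a/w1" "a/w1 \<le> 1" using ab w by (auto simp: divide_le_eq_1)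
  have ea: "a = (1 - a/w1)*0 + (a/w1)*w1" using ab w by auto
  have ka0: "(a,0) \<in> K" using segK[OF K k0 k1 la ea] by simp
  have "w2 = (1 - a/w1)*w2 + (a/w1)*w2" by (simp add: algebra_simps)
  then have ka2: "(a,w2) \<in> K" using segK[OF K k2 k3 la ea] by blast
  have lb: "0 \<le> b/w2" "b/w2 \<le> 1" using ab w by (auto simp: divide_le_eq_1)
  have eb: "b = (1 - b/w2)*0 + (b/w2)*w2" using ab w by auto
  have "a = (1 - b/w2)*a + (b/w2)*a" by (simp add: algebra_simps)
  then show ?thesis using segK[OF K ka0 ka2 lb _ eb] by blast
qed

lemma abstract:
  fixes D :: "real \<Rightarrow> real \<Rightarrow> 'b::linorder" and h :: "'a set \<Rightarrow> nat"
  assumes conv: "\<And>M. convex {(a,b). a\<in>{0..1} \<and> b\<in>{0..1} \<and> D a b \<le> M}"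
    and minD: "\<And>c a b. c\<in>{0..1} \<Longrightarrow> a\<in>{0..1} \<Longrightarrow> b\<in>{0..1} \<Longrightarrow> D c c \<le> D a b"
    and flip: "\<And>a b. D (1-a) (1-b) = D a b"
    and fx: "finite x" and r: "0 \<le> r" "r \<le> 1"
    and nb: "neighbours Kp Km x x'"
  shows "D (Ex r x (\<lambda>y. if h y = 0 then 1 else 0)) (Ex r x' (\<lambda>y. if h y = 0 then 1 else 0))
           \<le> max (D (1 - (1-r)^Km) 0) (D 0 (1 - (1-r)^Kp))"
proof -
  define g :: "'a set \<Rightarrow> real" where "g y = (if h y = 0 then 1 else 0)" for y
  define w1 where "w1 = 1 - (1-r)^Km"
  define w2 where "w2 = 1 - (1-r)^Kp"
  define M where "M = max (D w1 0) (D 0 w2)"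
  define K where "K = {(a,b). a\<in>{0..1} \<and> b\<in>{0..1} \<and> D a b \<le> M}"
  have w: "0 \<le> w1" "w1 \<le> 1" "0 \<le> w2" "w2 \<le> 1" using r
    by (simp_all add: w1_def w2_def power_le_one)
  have cK: "convex K" unfolding K_def by (rule conv)
  have k1: "(w1,0) \<in> K" unfolding K_def M_def using w by auto
  have k2: "(0,w2) \<in> K" unfolding K_def M_def using w by auto
  have kd: "(c,c) \<in> K" if "0 \<le> c" "c \<le> 1" for c
  proof -
    have "D c c \<le> D w1 0" using minD[of c w1 0] that w by auto
    then show ?thesis unfolding K_def M_def using that by (auto simp: le_max_iff_disj)
  qed
  have bx: "(a,b) \<in> K" if "0 \<le> a" "a \<le> w1" "0 \<le> b" "b \<le> w2" for a b
    using box[OF cK k1 k2 kd w that] by blast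
  have bx1: "(a,b) \<in> K" if "1 - w1 \<le> a" "a \<le> 1" "1 - w2 \<le> b" "b \<le> 1" for a b
  proof -
    have "(1-a,1-b) \<in> K" using bx[of "1-a" "1-b"] that by simp
    then show ?thesis unfolding K_def using flip[of a b] by auto
  qed
  obtain gm gp where G: "x' = (x - gm) \<union> gp" "gm \<subseteq> x" "card gm = Km"
     "gp \<inter> x = {}" "finite gp" "card gp = Kp"
    using nb unfolding neighbours_def by blast
  define S where "S = x - gm"
  have fS: "finite S" "finite gm" using fx G(2) finite_subset unfolding S_def by auto
  have xe: "x = S \<union> gm" using G(2) unfolding S_def by auto
  have xe': "x' = S \<union> gp" using G(1) unfolding S_def by auto
  have d1: "S \<inter> gm = {}" "S \<inter> gp = {}" using G(4) unfolding S_def by auto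
  define A where "A y0 = Ex r gm (\<lambda>y1. g (y0 \<union> y1))" for y0
  define B where "B y0 = Ex r gp (\<lambda>y1. g (y0 \<union> y1))" for y0
  have e1: "Ex r x g = Ex r S A" unfolding A_def xe using Ex_union[OF fS(2) fS(1) d1(1)] by simp
  have e2: "Ex r x' g = Ex r S B" unfolding B_def xe' using Ex_union[OF G(5) fS(1) d1(2)] by simp
  have g01: "0 \<le> g y \<and> g y \<le> 1" for y by (simp add: g_def)
  have AB: "(A y0, B y0) \<in> K" for y0
  proof -
    have bA: "(1 - r) ^ Km * g y0 \<le> A y0 \<and> A y0 \<le> (1 - r) ^ Km * g y0 + w1"
      using Ex_bounds[OF fS(2) r, of "\<lambda>y1. g (y0 \<union> y1)"] g01 G(3)
      unfolding A_def w1_def by simp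
    have bB: "(1 - r) ^ Kp * g y0 \<le> B y0 \<and> B y0 \<le> (1 - r) ^ Kp * g y0 + w2"
      using Ex_bounds[OF G(5) r, of "\<lambda>y1. g (y0 \<union> y1)"] g01 G(6)
      unfolding B_def w2_def by simp
    show ?thesis
    proof (cases "h y0 = 0")
      case True
      then have "g y0 = 1" by (simp add: g_def)
      then show ?thesis using bA bB bx1[of "A y0" "B y0"] unfolding w1_def w2_def by simp
    next
      case False
      then have "g y0 = 0" by (simp add: g_def)
      then show ?thesis using bA bB bx[of "A y0" "B y0"] by simp
    qed
  qed
  have "(Ex r S A, Ex r S B) \<in> K" using Ex_convex[OF fS(1) r cK AB] .
  then show ?thesis using e1 e2 unfolding K_def M_def w1_def w2_def g_def by simp
qed



lemma hs_eq: "hockey_stick \<alpha> p q = max (p 0 - \<alpha> * q 0) 0 + max (p 1 - \<alpha> * q 1) 0"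
  by (simp add: hockey_stick_def)

lemma max_conv: "0 \<le> u \<Longrightarrow> 0 \<le> v \<Longrightarrow> max (u * x + v * y) (0::real) \<le> u * max x 0 + v * max y 0"
  by (smt (verit, ccfv_SIG) max_def mult_left_mono mult_nonneg_nonneg)

lemma hs_conv:
  assumes th: "0 \<le> \<theta>" "\<theta> \<le> 1"
  shows "convex {(a,b). a\<in>{0..1} \<and> b\<in>{0..1} \<and> hockey_stick \<alpha> (P \<theta> a) (P \<theta> b) \<le> M}"
proof (rule convexI)
  fix p q :: "real \<times> real" and u v :: real
  assume hp: "p \<in> {(a,b). a\<in>{0..1} \<and> b\<in>{0..1} \<and> hockey_stick \<alpha> (P \<theta> a) (P \<theta> b) \<le> M}"
    and hq: "q \<in> {(a,b). a\<in>{0..1} \<and> b\<in>{0..1} \<and> hockey_stick \<alpha> (P \<theta> a) (P \<theta> b) \<le> M}"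
    and uv: "0 \<le> u" "0 \<le> v" "u + v = 1"
  obtain a1 b1 where p: "p = (a1,b1)" by (cases p)
  obtain a2 b2 where q: "q = (a2,b2)" by (cases q)
  have h: "0 \<le> a1" "a1 \<le> 1" "0 \<le> b1" "b1 \<le> 1" "hockey_stick \<alpha> (P \<theta> a1) (P \<theta> b1) \<le> M"
    "0 \<le> a2" "a2 \<le> 1" "0 \<le> b2" "b2 \<le> 1" "hockey_stick \<alpha> (P \<theta> a2) (P \<theta> b2) \<le> M"
    "0 \<le> u" "0 \<le> v" "u + v = 1" using hp hq uv p q by auto
  have c01: "0 \<le> u * q1 + v * q2 \<and> u * q1 + v * q2 \<le> 1" if "0 \<le> q1" "q1 \<le> 1" "0 \<le> q2" "q2 \<le> 1" for q1 q2
  proof -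
    have "u * q1 \<le> u" "v * q2 \<le> v" using h that by (simp_all add: mult_left_le)
    then show ?thesis using h that by simp
  qed
  have "hockey_stick \<alpha> (P \<theta> (u * a1 + v * a2)) (P \<theta> (u * b1 + v * b2))
     = max (u * (P \<theta> a1 0 - \<alpha> * P \<theta> b1 0) + v * (P \<theta> a2 0 - \<alpha> * P \<theta> b2 0)) 0
     + max (u * (P \<theta> a1 1 - \<alpha> * P \<theta> b1 1) + v * (P \<theta> a2 1 - \<alpha> * P \<theta> b2 1)) 0"
    unfolding hs_eq P_lin[OF h(13)] by (simp add: algebra_simps)
  also have "\<dots> \<le> u * hockey_stick \<alpha> (P \<theta> a1) (P \<theta> b1) + v * hockey_stick \<alpha> (P \<theta> a2) (P \<theta> b2)"
    unfolding hs_eq distrib_left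
    by (rule order.trans[OF add_mono[OF max_conv[OF h(11,12)] max_conv[OF h(11,12)]]]) (simp add: algebra_simps)
  also have "\<dots> \<le> u * M + v * M" using h by (simp add: add_mono mult_left_mono)
  also have "\<dots> = M" using h(13) by (metis distrib_right mult_1)
  finally have hM: "hockey_stick \<alpha> (P \<theta> (u * a1 + v * a2)) (P \<theta> (u * b1 + v * b2)) \<le> M" .
  show "u *\<^sub>R p + v *\<^sub>R q \<in> {(a,b). a\<in>{0..1} \<and> b\<in>{0..1} \<and> hockey_stick \<alpha> (P \<theta> a) (P \<theta> b) \<le> M}"
    using c01[of a1 a2] c01[of b1 b2] h hM p q by simp
qed

lemma hs_min:
  assumes th: "0 \<le> \<theta>" "\<theta> \<le> 1" and c: "0 \<le> c" "c \<le> 1"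
  shows "hockey_stick \<alpha> (P \<theta> c) (P \<theta> c) \<le> hockey_stick \<alpha> (P \<theta> a) (P \<theta> b)"
proof -
  have s: "P \<theta> c 0 + P \<theta> c 1 = 1" "P \<theta> a 0 + P \<theta> a 1 = 1" "P \<theta> b 0 + P \<theta> b 1 = 1" by (rule P_sum)+
  have n: "0 \<le> P \<theta> c 0" "0 \<le> P \<theta> c 1" using P_nonneg th c by auto
  have "hockey_stick \<alpha> (P \<theta> c) (P \<theta> c) = max (1 - \<alpha>) 0"
  proof (cases "\<alpha> \<le> 1")
    case True
    then have "max (P \<theta> c z - \<alpha> * P \<theta> c z) 0 = (1 - \<alpha>) * P \<theta> c z" if "0 \<le> P \<theta> c z" for z
      using mult_nonneg_nonneg[of "1-\<alpha>" "P \<theta> c z"] that True by (simp add: max_def left_diff_distrib)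
    then have "max (P \<theta> c 0 - \<alpha> * P \<theta> c 0) 0 = (1 - \<alpha>) * P \<theta> c 0"
      "max (P \<theta> c 1 - \<alpha> * P \<theta> c 1) 0 = (1 - \<alpha>) * P \<theta> c 1" using n by auto
    then have "hockey_stick \<alpha> (P \<theta> c) (P \<theta> c) = (1 - \<alpha>) * (P \<theta> c 0 + P \<theta> c 1)"
      unfolding hs_eq by (simp add: algebra_simps)
    then show ?thesis using s True by simp
  next
    case False
    then have "max (P \<theta> c z - \<alpha> * P \<theta> c z) 0 = 0" if "0 \<le> P \<theta> c z" for z
      using that mult_right_mono[of 1 \<alpha> "P \<theta> c z"] by (simp add: max_def)
    then have "max (P \<theta> c 0 - \<alpha> * P \<theta> c 0) 0 = 0"
      "max (P \<theta> c 1 - \<alpha> * P \<theta> c 1) 0 = 0" using n by auto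
    then show ?thesis using False unfolding hs_eq by simp
  qed
  also have "\<dots> \<le> hockey_stick \<alpha> (P \<theta> a) (P \<theta> b)"
  proof -
    have e: "(P \<theta> a 0 - \<alpha> * P \<theta> b 0) + (P \<theta> a 1 - \<alpha> * P \<theta> b 1) = 1 - \<alpha>"
      using s by (simp add: algebra_simps flip: distrib_left)
    have "P \<theta> a 0 - \<alpha> * P \<theta> b 0 \<le> max (P \<theta> a 0 - \<alpha> * P \<theta> b 0) 0"
      "P \<theta> a 1 - \<alpha> * P \<theta> b 1 \<le> max (P \<theta> a 1 - \<alpha> * P \<theta> b 1) 0"
      "0 \<le> max (P \<theta> a 0 - \<alpha> * P \<theta> b 0) 0" "0 \<le> max (P \<theta> a 1 - \<alpha> * P \<theta> b 1) 0" by simp_all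
    then show ?thesis unfolding hs_eq using e by linarith
  qed
  finally show ?thesis .
qed

lemma hs_flip: "hockey_stick \<alpha> (P \<theta> (1-a)) (P \<theta> (1-b)) = hockey_stick \<alpha> (P \<theta> a) (P \<theta> b)"
  unfolding hs_eq P_flip0 P_flip1 by simp



definition phi :: "real \<Rightarrow> real \<Rightarrow> real \<Rightarrow> ereal" where
  "phi \<alpha> p q = (if p = 0 then 0 else if q = 0 then \<infinity> else ereal (p powr \<alpha> * q powr (1 - \<alpha>)))"

lemma rm_eq: "renyi_moment \<alpha> p q = phi \<alpha> (p 0) (q 0) + phi \<alpha> (p 1) (q 1)"
  by (simp add: renyi_moment_def phi_def)

lemma phi_nonneg: "0 \<le> phi \<alpha> p q"
  by (simp add: phi_def)

lemma bern_real:
  fixes \<alpha> t :: real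
  assumes "1 < \<alpha>" "0 \<le> t"
  shows "1 + \<alpha> * (t - 1) \<le> t powr \<alpha>"
proof (cases "t = 0")
  case True then show ?thesis using assms by simp
next
  case False
  then have tp: "0 < t" using assms by simp
  have "(t powr \<alpha>) powr (1/\<alpha>) * 1 powr (1 - 1/\<alpha>) \<le> (1/\<alpha>) * t powr \<alpha> + (1 - 1/\<alpha>) * 1"
    using Youngs_inequality_0[of "1/\<alpha>" "1 - 1/\<alpha>" "t powr \<alpha>" 1] assms tp by simp
  moreover have "(t powr \<alpha>) powr (1/\<alpha>) = t" using assms tp by (simp add: powr_powr)
  ultimately have "t \<le> (1/\<alpha>) * t powr \<alpha> + (1 - 1/\<alpha>)" by simp
  then have "\<alpha> * t \<le> \<alpha> * ((1/\<alpha>) * t powr \<alpha> + (1 - 1/\<alpha>))" using assms by simp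
  also have "\<dots> = t powr \<alpha> + \<alpha> - 1" using assms by (simp add: algebra_simps)
  finally show ?thesis by (simp add: algebra_simps)
qed

lemma tangent:
  fixes \<alpha> p q s :: real
  assumes a: "1 < \<alpha>" and p: "0 < p" and q: "0 < q" and s: "0 < s"
  shows "\<alpha> * s powr (\<alpha> - 1) * p - (\<alpha> - 1) * s powr \<alpha> * q \<le> p powr \<alpha> * q powr (1 - \<alpha>)"
proof -
  define t where "t = p / (s * q)"
  have tp: "0 < t" using p q s by (simp add: t_def)
  have "s powr \<alpha> * q * (1 + \<alpha> * (t - 1)) \<le> s powr \<alpha> * q * t powr \<alpha>"
    using bern_real[OF a, of t] tp q s by simp
  moreover have "s powr \<alpha> * q * (1 + \<alpha> * (t - 1)) = \<alpha> * s powr (\<alpha> - 1) * p - (\<alpha> - 1) * s powr \<alpha> * q"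
  proof -
    have "s powr \<alpha> * q * t = s powr (\<alpha> - 1) * p"
      using p q s by (simp add: t_def powr_diff field_simps)
    then show ?thesis by (simp add: algebra_simps)
  qed
  moreover have "s powr \<alpha> * q * t powr \<alpha> = p powr \<alpha> * q powr (1 - \<alpha>)"
    using p q s by (simp add: t_def powr_divide powr_mult powr_diff field_simps)
  ultimately show ?thesis by simp
qed

lemma phi_lower:
  assumes a: "1 < \<alpha>" and p: "0 \<le> p" and q: "0 \<le> q" and s: "0 < s"
  shows "ereal (\<alpha> * s powr (\<alpha> - 1) * p - (\<alpha> - 1) * s powr \<alpha> * q) \<le> phi \<alpha> p q"
proof (cases "p = 0")
  case True
  then show ?thesis using a q s by (simp add: phi_def)
next
  case False
  then show ?thesis using tangent[OF a, of p q s] a p q s by (auto simp: phi_def)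
qed

lemma phi_diag: "0 \<le> p \<Longrightarrow> phi \<alpha> p p = ereal p"
  by (auto simp: phi_def powr_add[symmetric])

lemma phi_conv:
  assumes a: "1 < \<alpha>" and uv: "0 \<le> u" "0 \<le> v" "u + v = 1"
    and nn: "0 \<le> p1" "0 \<le> q1" "0 \<le> p2" "0 \<le> q2"
  shows "phi \<alpha> (u * p1 + v * p2) (u * q1 + v * q2) \<le> ereal u * phi \<alpha> p1 q1 + ereal v * phi \<alpha> p2 q2"
proof -
  define p where "p = u * p1 + v * p2"
  define q where "q = u * q1 + v * q2"
  have pq: "0 \<le> p" "0 \<le> q" using uv nn by (simp_all add: p_def q_def)
  have rnn: "0 \<le> ereal u * phi \<alpha> p1 q1" "0 \<le> ereal v * phi \<alpha> p2 q2"
    using uv phi_nonneg by simp_all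
  show ?thesis
  proof (cases "p = 0")
    case True
    then show ?thesis using rnn by (simp add: p_def phi_def)
  next
    case pn: False
    then have pp: "0 < p" using pq by simp
    show ?thesis
    proof (cases "q = 0")
      case True
      then have "u * q1 = 0" "v * q2 = 0" using uv nn unfolding q_def
        by (smt (verit) mult_nonneg_nonneg)+
      moreover have "0 < u * p1 \<or> 0 < v * p2" using pp uv nn unfolding p_def
        by (smt (verit) mult_nonneg_nonneg)
      ultimately have "(0 < u \<and> 0 < p1 \<and> q1 = 0) \<or> (0 < v \<and> 0 < p2 \<and> q2 = 0)"
        using uv nn by (auto simp: zero_less_mult_iff)
      then have "ereal u * phi \<alpha> p1 q1 = \<infinity> \<or> ereal v * phi \<alpha> p2 q2 = \<infinity>"
        by (auto simp: phi_def)
      then show ?thesis using rnn by auto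
    next
      case qn: False
      then have qp: "0 < q" using pq by simp
      define s where "s = p / q"
      have sp: "0 < s" using pp qp by (simp add: s_def)
      define T where "T p' q' = \<alpha> * s powr (\<alpha> - 1) * p' - (\<alpha> - 1) * s powr \<alpha> * q'" for p' q'
      have l1: "ereal u * ereal (T p1 q1) \<le> ereal u * phi \<alpha> p1 q1"
        unfolding T_def by (rule ereal_mult_left_mono[OF phi_lower[OF a nn(1,2) sp]]) (simp add: uv)
      have l2: "ereal v * ereal (T p2 q2) \<le> ereal v * phi \<alpha> p2 q2"
        unfolding T_def by (rule ereal_mult_left_mono[OF phi_lower[OF a nn(3,4) sp]]) (simp add: uv)
      have "u * T p1 q1 + v * T p2 q2 = \<alpha> * s powr (\<alpha> - 1) * p - (\<alpha> - 1) * s powr \<alpha> * q"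
        unfolding T_def p_def q_def by (simp add: algebra_simps)
      also have "\<dots> = p powr \<alpha> * q powr (1 - \<alpha>)"
      proof -
        have e1: "s powr (\<alpha> - 1) * p = p powr \<alpha> * q powr (1 - \<alpha>)"
          using pp qp by (simp add: s_def powr_divide powr_diff powr_add field_simps)
        have e2: "s powr \<alpha> * q = p powr \<alpha> * q powr (1 - \<alpha>)"
          using pp qp by (simp add: s_def powr_divide powr_diff field_simps)
        show ?thesis using e1 e2 by (simp add: algebra_simps)
      qed
      finally have "phi \<alpha> p q = ereal u * ereal (T p1 q1) + ereal v * ereal (T p2 q2)"
        using pn qn by (simp add: phi_def)
      then show ?thesis using l1 l2 add_mono unfolding p_def q_def by fastforce
    qed
  qed
qed



lemma rm_conv:
  assumes a: "1 < \<alpha>" and th: "0 \<le> \<theta>" "\<theta> \<le> 1"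
  shows "convex {(a,b). a\<in>{0..1} \<and> b\<in>{0..1} \<and> renyi_moment \<alpha> (P \<theta> a) (P \<theta> b) \<le> M}"
proof (rule convexI)
  fix p q :: "real \<times> real" and u v :: real
  assume hp: "p \<in> {(a,b). a\<in>{0..1} \<and> b\<in>{0..1} \<and> renyi_moment \<alpha> (P \<theta> a) (P \<theta> b) \<le> M}"
    and hq: "q \<in> {(a,b). a\<in>{0..1} \<and> b\<in>{0..1} \<and> renyi_moment \<alpha> (P \<theta> a) (P \<theta> b) \<le> M}"
    and uv: "0 \<le> u" "0 \<le> v" "u + v = 1"
  obtain a1 b1 where p: "p = (a1,b1)" by (cases p)
  obtain a2 b2 where q: "q = (a2,b2)" by (cases q)
  have h: "0 \<le> a1" "a1 \<le> 1" "0 \<le> b1" "b1 \<le> 1" "renyi_moment \<alpha> (P \<theta> a1) (P \<theta> b1) \<le> M"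
    "0 \<le> a2" "a2 \<le> 1" "0 \<le> b2" "b2 \<le> 1" "renyi_moment \<alpha> (P \<theta> a2) (P \<theta> b2) \<le> M"
    using hp hq p q by auto
  have c01: "0 \<le> u * q1 + v * q2 \<and> u * q1 + v * q2 \<le> 1" if "0 \<le> q1" "q1 \<le> 1" "0 \<le> q2" "q2 \<le> 1" for q1 q2
  proof -
    have "u * q1 \<le> u" "v * q2 \<le> v" using uv that by (simp_all add: mult_left_le)
    then show ?thesis using uv that by simp
  qed
  have nn: "0 \<le> P \<theta> a1 z" "0 \<le> P \<theta> b1 z" "0 \<le> P \<theta> a2 z" "0 \<le> P \<theta> b2 z" for z
    using P_nonneg th h by auto
  let ?u = "ereal u" and ?v = "ereal v"
  have "renyi_moment \<alpha> (P \<theta> (u * a1 + v * a2)) (P \<theta> (u * b1 + v * b2))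
     = phi \<alpha> (u * P \<theta> a1 0 + v * P \<theta> a2 0) (u * P \<theta> b1 0 + v * P \<theta> b2 0)
     + phi \<alpha> (u * P \<theta> a1 1 + v * P \<theta> a2 1) (u * P \<theta> b1 1 + v * P \<theta> b2 1)"
    unfolding rm_eq P_lin[OF uv(3)] by simp
  also have "\<dots> \<le> (?u * phi \<alpha> (P \<theta> a1 0) (P \<theta> b1 0) + ?v * phi \<alpha> (P \<theta> a2 0) (P \<theta> b2 0))
     + (?u * phi \<alpha> (P \<theta> a1 1) (P \<theta> b1 1) + ?v * phi \<alpha> (P \<theta> a2 1) (P \<theta> b2 1))"
    by (intro add_mono phi_conv a uv nn)
  also have "\<dots> = ?u * renyi_moment \<alpha> (P \<theta> a1) (P \<theta> b1) + ?v * renyi_moment \<alpha> (P \<theta> a2) (P \<theta> b2)"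
    unfolding rm_eq by (simp add: ereal_right_distrib phi_nonneg ac_simps)
  also have "\<dots> \<le> ?u * M + ?v * M"
    using h uv by (intro add_mono ereal_mult_left_mono) auto
  also have "\<dots> = (?u + ?v) * M" by (rule ereal_left_distrib[symmetric]) (use uv in auto)
  also have "\<dots> = M" using uv by simp
  finally have hM: "renyi_moment \<alpha> (P \<theta> (u * a1 + v * a2)) (P \<theta> (u * b1 + v * b2)) \<le> M" .
  show "u *\<^sub>R p + v *\<^sub>R q \<in> {(a,b). a\<in>{0..1} \<and> b\<in>{0..1} \<and> renyi_moment \<alpha> (P \<theta> a) (P \<theta> b) \<le> M}"
    using c01[of a1 a2] c01[of b1 b2] h hM p q by simp
qed

lemma rm_min:
  assumes a: "1 < \<alpha>" and th: "0 \<le> \<theta>" "\<theta> \<le> 1" and r: "c\<in>{0..1}" "a\<in>{0..1}" "b\<in>{0..1}"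
  shows "renyi_moment \<alpha> (P \<theta> c) (P \<theta> c) \<le> renyi_moment \<alpha> (P \<theta> a) (P \<theta> b)"
proof -
  have nn: "0 \<le> P \<theta> c z" "0 \<le> P \<theta> a z" "0 \<le> P \<theta> b z" for z
    using P_nonneg th r by auto
  have s: "P \<theta> c 0 + P \<theta> c 1 = 1" "P \<theta> a 0 + P \<theta> a 1 = 1" "P \<theta> b 0 + P \<theta> b 1 = 1" by (rule P_sum)+
  have "renyi_moment \<alpha> (P \<theta> c) (P \<theta> c) = ereal (P \<theta> c 0 + P \<theta> c 1)"
    unfolding rm_eq using nn by (simp add: phi_diag)
  also have "\<dots> = ereal (\<alpha> * (P \<theta> a 0 + P \<theta> a 1) - (\<alpha> - 1) * (P \<theta> b 0 + P \<theta> b 1))"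
    using s by simp
  also have "\<dots> = ereal (\<alpha> * 1 powr (\<alpha> - 1) * P \<theta> a 0 - (\<alpha> - 1) * 1 powr \<alpha> * P \<theta> b 0)
      + ereal (\<alpha> * 1 powr (\<alpha> - 1) * P \<theta> a 1 - (\<alpha> - 1) * 1 powr \<alpha> * P \<theta> b 1)"
    by (simp add: algebra_simps)
  also have "\<dots> \<le> renyi_moment \<alpha> (P \<theta> a) (P \<theta> b)"
    unfolding rm_eq by (intro add_mono phi_lower a nn) simp_all
  finally show ?thesis .
qed

lemma rm_flip: "renyi_moment \<alpha> (P \<theta> (1-a)) (P \<theta> (1-b)) = renyi_moment \<alpha> (P \<theta> a) (P \<theta> b)"
  unfolding rm_eq P_flip0 P_flip1 by (simp add: add.commute)

lemma mix_same: "mix w (Bern \<theta>) (Bern \<theta>) = P \<theta> 0"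
  by (rule ext) (simp add: mix_def P_def algebra_simps)

theorem mainTheorem8:
  fixes A :: "'a set" and x x' :: "'a set" and h :: "'a set \<Rightarrow> nat"
    and \<theta> r :: real and Kp Km :: nat
  assumes "finite A" and "x \<subseteq> A" and "x' \<subseteq> A"
    and "\<And>y. h y \<in> {0, 1}"
    and "0 \<le> \<theta>" and "\<theta> \<le> 1" and "0 \<le> r" and "r \<le> 1"
    and "neighbours Kp Km x x'"
  defines "w1 \<equiv> 1 - (1 - r) ^ Km" and "w2 \<equiv> 1 - (1 - r) ^ Kp"
  shows "(\<forall>\<alpha>::real. 0 \<le> \<alpha> \<longrightarrow>
            hockey_stick \<alpha> (subsampled_pmf h \<theta> r x) (subsampled_pmf h \<theta> r x')
            \<le> (MAX \<tau>\<in>{\<theta>, 1 - \<theta>}. hockey_stick \<alpha>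
                  (mix w1 (Bern \<theta>) (Bern \<tau>)) (mix w2 (Bern \<theta>) (Bern (1 - \<tau>)))))
       \<and> (\<forall>\<alpha>::real. 1 < \<alpha> \<longrightarrow>
            renyi_moment \<alpha> (subsampled_pmf h \<theta> r x) (subsampled_pmf h \<theta> r x')
            \<le> (MAX \<tau>\<in>{\<theta>, 1 - \<theta>}. renyi_moment \<alpha>
                  (mix w1 (Bern \<theta>) (Bern \<tau>)) (mix w2 (Bern \<theta>) (Bern (1 - \<tau>)))))"
proof -
  have fx: "finite x" "finite x'" using assms(1,2,3) finite_subset by auto
  define g :: "'a set \<Rightarrow> real" where "g y = (if h y = 0 then 1 else 0)" for y
  have sx: "subsampled_pmf h \<theta> r x = P \<theta> (Ex r x g)"
    using sub_P[OF fx(1) assms(4)] unfolding g_def by simp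
  have sx': "subsampled_pmf h \<theta> r x' = P \<theta> (Ex r x' g)"
    using sub_P[OF fx(2) assms(4)] unfolding g_def by simp
  have m1: "mix w1 (Bern \<theta>) (Bern (1 - \<theta>)) = P \<theta> w1" "mix w2 (Bern \<theta>) (Bern (1 - \<theta>)) = P \<theta> w2"
    by (simp_all add: P_def)
  have mx: "(MAX \<tau>\<in>{\<theta>, 1 - \<theta>}. F (mix w1 (Bern \<theta>) (Bern \<tau>)) (mix w2 (Bern \<theta>) (Bern (1 - \<tau>))))
      = max (F (P \<theta> w1) (P \<theta> 0)) (F (P \<theta> 0) (P \<theta> w2))" for F :: "_ \<Rightarrow> _ \<Rightarrow> 'b::linorder"
    by (simp add: m1 mix_same max.commute)
  show ?thesis
  proof (intro conjI allI impI)
    fix \<alpha> :: real assume "0 \<le> \<alpha>"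
    show "hockey_stick \<alpha> (subsampled_pmf h \<theta> r x) (subsampled_pmf h \<theta> r x')
            \<le> (MAX \<tau>\<in>{\<theta>, 1 - \<theta>}. hockey_stick \<alpha>
                  (mix w1 (Bern \<theta>) (Bern \<tau>)) (mix w2 (Bern \<theta>) (Bern (1 - \<tau>))))"
      unfolding sx sx' mx[of "hockey_stick \<alpha>"] unfolding g_def w1_def w2_def
      by (rule abstract[where D = "\<lambda>a b. hockey_stick \<alpha> (P \<theta> a) (P \<theta> b)"])
        (use assms hs_conv hs_min hs_flip fx in auto)
  next
    fix \<alpha> :: real assume al: "1 < \<alpha>"
    show "renyi_moment \<alpha> (subsampled_pmf h \<theta> r x) (subsampled_pmf h \<theta> r x')
            \<le> (MAX \<tau>\<in>{\<theta>, 1 - \<theta>}. renyi_moment \<alpha>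
                  (mix w1 (Bern \<theta>) (Bern \<tau>)) (mix w2 (Bern \<theta>) (Bern (1 - \<tau>))))"
      unfolding sx sx' mx[of "renyi_moment \<alpha>"] unfolding g_def w1_def w2_def
      by (rule abstract[where D = "\<lambda>a b. renyi_moment \<alpha> (P \<theta> a) (P \<theta> b)"])
        (use assms rm_conv[OF al] rm_min[OF al] rm_flip fx in auto)
  qed
qed


end
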